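(* For each integer $k\ge0$ there is a polynomial $E_k(d)\in\mathbb{Q}[d]$ of degree $k$ such that $\mathbb{E}[\mathcal{X}_d^k]=E_k(d)$ for all integers $d\ge k-1$, $d\ge0$. These polynomials satisfy the formal power series identity (in $z$, for every $d$) \[ \sum_{k\ge0}\frac{E_k(d)}{k!}z^k=\Big(\frac{e^z-1}{z}\Big)^{d+2}e^{-z}. \] In particular, setting $E'_k(d)=\sum_{i=0}^k\binom{k}{i}E_i(d)\big(-\tfrac d2\big)^{k-i}$, one has for all integers $a,b\ge0$ and $k\ge0$ \[ E'_k(a+b+2)=\sum_{i+j=k}\binom{k}{i}E'_i(a)E'_j(b). \]
   Context: $\mathcal{X}_d$ is the random variable equal to the number of descents of a uniformly random permutation of $\{1,\dots,d+1\}$ (equivalently, the random variable with $\Pr(\mathcal{X}_d=k)=a_k/\sum_i a_i$ where $a_k=\dim A^k$ of the Chow ring of the Boolean matroid on $d+1$ elements, these being Eulerian numbers). *)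

theory Defs
  imports "HOL-Combinatorics.Permutations" "HOL-Computational_Algebra.Polynomial"
    "HOL-Computational_Algebra.Formal_Power_Series"
begin

definition descents :: "nat \<Rightarrow> (nat \<Rightarrow> nat) \<Rightarrow> nat" where
  "descents n p = card {i \<in> {1..<n}. p (Suc i) < p i}"

text \<open>k-th moment of X_d: the number of descents of a uniformly random
  permutation of {1..d+1}.\<close>
definition moment_X :: "nat \<Rightarrow> nat \<Rightarrow> rat" where
  "moment_X k d = (\<Sum>p\<in>{p. p permutes {1..d+1}}. of_nat (descents (d+1) p) ^ k)
                  / of_nat (card {p. p permutes {1..d+1}})"

definition Eprime :: "(nat \<Rightarrow> rat poly) \<Rightarrow> nat \<Rightarrow> rat \<Rightarrow> rat" where
  "Eprime E k x = (\<Sum>i\<le>k. of_nat (k choose i) * poly (E i) x * (- x / 2) ^ (k - i))"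

end

theory Submission
  imports Defs
begin



definition dsc :: "(nat \<Rightarrow> nat) \<Rightarrow> nat \<Rightarrow> nat" where
  "dsc p i = (if p (Suc i) < p i then 1 else 0)"

lemma des_sum: "descents n p = (\<Sum>i\<in>{1..<n}. dsc p i)"
  unfolding descents_def dsc_def
  by (simp add: sum.inter_filter[symmetric])

definition ins :: "nat \<Rightarrow> (nat \<Rightarrow> nat) \<Rightarrow> nat \<Rightarrow> nat \<Rightarrow> nat" where
  "ins n p r = (\<lambda>i. if i < r then p i else if i = r then Suc n else if i \<le> Suc n then p (i - 1) else i)"

lemma perm_range: "p permutes {1..n} \<Longrightarrow> i \<in> {1..n} \<Longrightarrow> p i \<in> {1..n}"
  using permutes_in_image[of p "{1..n}" i] by blast

lemma perm_out: "p permutes {1..n} \<Longrightarrow> i \<notin> {1..n} \<Longrightarrow> p i = i"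
  by (simp add: permutes_not_in)

lemma ins_r[simp]: "ins n p r r = Suc n"
  by (simp add: ins_def)

lemma ins_perm:
  assumes p: "p permutes {1..n}" and r: "1 \<le> r" "r \<le> Suc n"
  shows "ins n p r permutes {1..Suc n}"
proof (rule bij_imp_permutes)
  show "ins n p r x = x" if "x \<notin> {1..Suc n}" for x
  proof -
    have "x = 0 \<or> x > Suc n" using that by auto
    then show ?thesis using r perm_out[OF p, of 0] by (auto simp: ins_def)
  qed
  have inj: "inj p" using p by (rule permutes_inj)
  have sub: "ins n p r ` {1..Suc n} \<subseteq> {1..Suc n}"
  proof
    fix y assume "y \<in> ins n p r ` {1..Suc n}"
    then obtain i where i: "i \<in> {1..Suc n}" "y = ins n p r i" by auto
    show "y \<in> {1..Suc n}"
    proof (cases "i < r")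
      case True
      then have "i \<in> {1..n}" using i r by auto
      then show ?thesis using perm_range[OF p, of i] i True by (auto simp: ins_def)
    next
      case False
      show ?thesis
      proof (cases "i = r")
        case True then show ?thesis using i by (auto simp: ins_def)
      next
        case False2: False
        then have "i - 1 \<in> {1..n}" using i r False by auto
        then show ?thesis using perm_range[OF p, of "i-1"] i False False2 by (auto simp: ins_def)
      qed
    qed
  qed
  have "inj_on (ins n p r) {1..Suc n}"
  proof (rule inj_onI)
    fix i j assume i: "i \<in> {1..Suc n}" and j: "j \<in> {1..Suc n}" and e: "ins n p r i = ins n p r j"
    have v: "ins n p r x \<noteq> Suc n" if "x \<in> {1..Suc n}" "x \<noteq> r" for x
    proof (cases "x < r")
      case True
      then have "x \<in> {1..n}" using that r by auto
      then show ?thesis using perm_range[OF p, of x] True by (auto simp: ins_def)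
    next
      case False
      then have "x - 1 \<in> {1..n}" using that r by auto
      then show ?thesis using perm_range[OF p, of "x-1"] that False by (auto simp: ins_def)
    qed
    show "i = j"
    proof (cases "i = r \<or> j = r")
      case True
      then show ?thesis using v[OF i] v[OF j] e ins_r[of n p r] by metis
    next
      case False
      then have "(if i < r then p i else p (i - 1)) = (if j < r then p j else p (j - 1))"
        using e i j by (auto simp: ins_def split: if_splits)
      then have "(if i < r then i else i - 1) = (if j < r then j else j - 1)"
        using inj by (auto simp: inj_eq split: if_splits)
      then show ?thesis using False i j r by (auto split: if_splits)
    qed
  qed
  then show "bij_betw (ins n p r) {1..Suc n} {1..Suc n}"
    using sub endo_inj_surj[of "{1..Suc n}"] by (simp add: bij_betw_def)
qed

lemma ins_inj: "inj_on (\<lambda>(p,r). ins n p r) ({p. p permutes {1..n}} \<times> {1..Suc n})"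
proof (rule inj_onI, clarify)
  fix p r p' r'
  assume p: "p permutes {1..n}" and p': "p' permutes {1..n}"
    and r: "r \<in> {1..Suc n}" and r': "r' \<in> {1..Suc n}" and e: "ins n p r = ins n p' r'"
  have v: "ins n q s x \<noteq> Suc n" if q: "q permutes {1..n}" and "s \<in> {1..Suc n}" "x \<in> {1..Suc n}" "x \<noteq> s" for q s x
  proof (cases "x < s")
    case True
    then have "x \<in> {1..n}" using that by auto
    then show ?thesis using perm_range[OF q, of x] True by (auto simp: ins_def)
  next
    case False
    then have "x - 1 \<in> {1..n}" using that by auto
    then show ?thesis using perm_range[OF q, of "x-1"] that False by (auto simp: ins_def)
  qed
  have rr: "r = r'"
  proof (rule ccontr)
    assume "r \<noteq> r'"
    then have "ins n p' r' r \<noteq> Suc n" using v[OF p' r' r] by auto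
    then show False using e ins_r[of n p r] by metis
  qed
  have "p x = p' x" for x
  proof (cases "x < r")
    case True
    then show ?thesis using fun_cong[OF e, of x] rr by (simp add: ins_def)
  next
    case False
    show ?thesis
    proof (cases "x \<le> n")
      case True
      then show ?thesis using fun_cong[OF e, of "Suc x"] rr False by (simp add: ins_def)
    next
      case False
      then show ?thesis using perm_out[OF p, of x] perm_out[OF p', of x] by simp
    qed
  qed
  then show "p = p' \<and> r = r'" using rr by auto
qed

lemma ins_bij: "bij_betw (\<lambda>(p,r). ins n p r) ({p. p permutes {1..n}} \<times> {1..Suc n}) {p. p permutes {1..Suc n}}"
proof -
  let ?A = "{p. p permutes {1..n}} \<times> {1..Suc n}" and ?B = "{p. p permutes {1..Suc n}}"
  have sub: "(\<lambda>(p,r). ins n p r) ` ?A \<subseteq> ?B" using ins_perm by auto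
  have fin: "finite ?B" by (rule finite_permutations) simp
  have "card ((\<lambda>(p,r). ins n p r) ` ?A) = card ?A" by (rule card_image[OF ins_inj])
  also have "\<dots> = fact n * Suc n" by (simp add: card_cartesian_product card_permutations)
  also have "\<dots> = card ?B" by (simp add: card_permutations)
  finally have "(\<lambda>(p,r). ins n p r) ` ?A = ?B" using card_subset_eq[OF fin sub] by simp
  then show ?thesis using ins_inj by (simp add: bij_betw_def)
qed

lemma ins_des:
  assumes p: "p permutes {1..n}" and n: "1 \<le> n" and r: "1 \<le> r" "r \<le> Suc n"
  shows "descents (Suc n) (ins n p r) + (if 2 \<le> r \<and> r \<le> n then dsc p (r-1) else 0)
       = descents n p + (if r \<le> n then 1 else 0)"
proof -
  let ?q = "ins n p r"
  have rng: "p i \<le> n" if "1 \<le> i" "i \<le> n" for i using perm_range[OF p, of i] that by auto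
  consider "r = 1" | "r = Suc n" | "2 \<le> r \<and> r \<le> n" using r n by linarith
  then show ?thesis
  proof cases
    case 1
    have "descents (Suc n) ?q = dsc ?q 1 + (\<Sum>i\<in>{Suc 1..<Suc n}. dsc ?q i)"
      unfolding des_sum by (rule sum.atLeast_Suc_lessThan) (use n in simp)
    also have "(\<Sum>i\<in>{Suc 1..<Suc n}. dsc ?q i) = (\<Sum>i\<in>{1..<n}. dsc ?q (Suc i))"
      by (rule sum.shift_bounds_Suc_ivl)
    also have "\<dots> = (\<Sum>i\<in>{1..<n}. dsc p i)"
      by (rule sum.cong) (use 1 in \<open>auto simp: dsc_def ins_def\<close>)
    also have "dsc ?q 1 = 1" using 1 rng[of 1] n by (simp add: dsc_def ins_def)
    finally show ?thesis using 1 n by (simp add: des_sum)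
  next
    case 2
    have "descents (Suc n) ?q = (\<Sum>i\<in>{1..<n}. dsc ?q i) + dsc ?q n"
      unfolding des_sum using n by (simp add: sum.atLeastLessThan_Suc)
    also have "(\<Sum>i\<in>{1..<n}. dsc ?q i) = (\<Sum>i\<in>{1..<n}. dsc p i)"
      by (rule sum.cong) (use 2 in \<open>auto simp: dsc_def ins_def\<close>)
    also have "dsc ?q n = 0" using 2 rng[of n] n by (simp add: dsc_def ins_def)
    finally show ?thesis using 2 by (simp add: des_sum)
  next
    case 3
    define s where "s = r - 1"
    have s: "1 \<le> s" "s < n" "r = Suc s" using 3 unfolding s_def by auto
    have A: "(\<Sum>i\<in>{1..<Suc n}. f i) = (\<Sum>i\<in>{1..<s}. f i) + f s + f (Suc s) + (\<Sum>i\<in>{Suc s..<n}. f (Suc i))"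
      for f :: "nat \<Rightarrow> nat"
    proof -
      have "(\<Sum>i\<in>{1..<Suc n}. f i) = (\<Sum>i\<in>{1..<s}. f i) + (\<Sum>i\<in>{s..<Suc n}. f i)"
        using s by (simp add: sum.atLeastLessThan_concat)
      also have "(\<Sum>i\<in>{s..<Suc n}. f i) = f s + (\<Sum>i\<in>{Suc s..<Suc n}. f i)"
        by (rule sum.atLeast_Suc_lessThan) (use s in simp)
      also have "(\<Sum>i\<in>{Suc s..<Suc n}. f i) = f (Suc s) + (\<Sum>i\<in>{Suc (Suc s)..<Suc n}. f i)"
        by (rule sum.atLeast_Suc_lessThan) (use s in simp)
      also have "(\<Sum>i\<in>{Suc (Suc s)..<Suc n}. f i) = (\<Sum>i\<in>{Suc s..<n}. f (Suc i))"
        by (rule sum.shift_bounds_Suc_ivl)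
      finally show ?thesis by simp
    qed
    have B: "descents n p = (\<Sum>i\<in>{1..<s}. dsc p i) + dsc p s + (\<Sum>i\<in>{Suc s..<n}. dsc p i)"
    proof -
      have "descents n p = (\<Sum>i\<in>{1..<s}. dsc p i) + (\<Sum>i\<in>{s..<n}. dsc p i)"
        unfolding des_sum using s by (simp add: sum.atLeastLessThan_concat)
      also have "(\<Sum>i\<in>{s..<n}. dsc p i) = dsc p s + (\<Sum>i\<in>{Suc s..<n}. dsc p i)"
        by (rule sum.atLeast_Suc_lessThan) (use s in simp)
      finally show ?thesis by simp
    qed
    have c1: "(\<Sum>i\<in>{1..<s}. dsc ?q i) = (\<Sum>i\<in>{1..<s}. dsc p i)"
      by (rule sum.cong) (use s in \<open>auto simp: dsc_def ins_def\<close>)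
    have c2: "(\<Sum>i\<in>{Suc s..<n}. dsc ?q (Suc i)) = (\<Sum>i\<in>{Suc s..<n}. dsc p i)"
      by (rule sum.cong) (use s in \<open>auto simp: dsc_def ins_def\<close>)
    have c3: "dsc ?q s = 0" using s rng[of s] by (simp add: dsc_def ins_def)
    have c4: "dsc ?q (Suc s) = 1" using s rng[of "Suc s"] by (simp add: dsc_def ins_def)
    have "descents (Suc n) ?q = (\<Sum>i\<in>{1..<s}. dsc p i) + 1 + (\<Sum>i\<in>{Suc s..<n}. dsc p i)"
      unfolding des_sum A c1 c2 c3 c4 by simp
    then show ?thesis using B s 3 by simp
  qed
qed

lemma dsc_01: "dsc p i = 0 \<or> dsc p i = 1"
  by (simp add: dsc_def)

lemma sum_r:
  fixes f :: "nat \<Rightarrow> rat"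
  assumes p: "p permutes {1..n}" and n: "1 \<le> n"
  shows "(\<Sum>r\<in>{1..Suc n}. f (descents (Suc n) (ins n p r)))
     = (of_nat (descents n p) + 1) * f (descents n p) + (of_nat n - of_nat (descents n p)) * f (Suc (descents n p))"
proof -
  let ?D = "descents n p"
  let ?g = "\<lambda>r. f (descents (Suc n) (ins n p r))"
  have set: "{1..Suc n} = insert 1 (insert (Suc n) {Suc 1..<Suc n})" using n by auto
  have "(\<Sum>r\<in>{1..Suc n}. ?g r) = ?g 1 + (?g (Suc n) + (\<Sum>r\<in>{Suc 1..<Suc n}. ?g r))"
    unfolding set using n by (simp add: sum.insert)
  also have "(\<Sum>r\<in>{Suc 1..<Suc n}. ?g r) = (\<Sum>i\<in>{1..<n}. ?g (Suc i))"
    by (rule sum.shift_bounds_Suc_ivl)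
  also have "\<dots> = (\<Sum>i\<in>{1..<n}. of_nat (dsc p i) * f ?D + (1 - of_nat (dsc p i)) * f (Suc ?D))"
  proof (rule sum.cong)
    fix i assume i: "i \<in> {1..<n}"
    have e: "descents (Suc n) (ins n p (Suc i)) + dsc p i = ?D + 1"
      using ins_des[OF p n, of "Suc i"] i by auto
    show "?g (Suc i) = of_nat (dsc p i) * f ?D + (1 - of_nat (dsc p i)) * f (Suc ?D)"
      using dsc_01[of p i] e by auto
  qed simp
  also have "\<dots> = of_nat ?D * f ?D + (of_nat n - 1 - of_nat ?D) * f (Suc ?D)"
  proof -
    have s: "(\<Sum>i\<in>{1..<n}. (of_nat (dsc p i) :: rat)) = of_nat ?D"
      by (simp add: des_sum)
    have "(\<Sum>i\<in>{1..<n}. of_nat (dsc p i) * f ?D + (1 - of_nat (dsc p i)) * f (Suc ?D))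
       = (\<Sum>i\<in>{1..<n}. (of_nat (dsc p i) :: rat)) * f ?D + (of_nat (n - 1) - (\<Sum>i\<in>{1..<n}. (of_nat (dsc p i) :: rat))) * f (Suc ?D)"
      by (simp add: sum.distrib sum_distrib_right sum_distrib_left sum_subtractf algebra_simps)
    then show ?thesis unfolding s using n by (simp add: of_nat_diff)
  qed
  also have "?g 1 = f (Suc ?D)" using ins_des[OF p n, of 1] n by simp
  also have "?g (Suc n) = f ?D" using ins_des[OF p n, of "Suc n"] n by simp
  finally show ?thesis by (simp add: algebra_simps)
qed

lemma perm_sum:
  fixes f :: "nat \<Rightarrow> rat"
  assumes n: "1 \<le> n"
  shows "(\<Sum>q\<in>{q. q permutes {1..Suc n}}. f (descents (Suc n) q))
     = (\<Sum>p\<in>{p. p permutes {1..n}}. (of_nat (descents n p) + 1) * f (descents n p)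
          + (of_nat n - of_nat (descents n p)) * f (Suc (descents n p)))"
proof -
  have "(\<Sum>q\<in>{q. q permutes {1..Suc n}}. f (descents (Suc n) q))
     = (\<Sum>x\<in>{p. p permutes {1..n}} \<times> {1..Suc n}. f (descents (Suc n) ((\<lambda>(p,r). ins n p r) x)))"
    by (rule sum.reindex_bij_betw[OF ins_bij, symmetric])
  also have "\<dots> = (\<Sum>p\<in>{p. p permutes {1..n}}. \<Sum>r\<in>{1..Suc n}. f (descents (Suc n) (ins n p r)))"
    by (simp only: sum.cartesian_product split_def)
  also have "\<dots> = (\<Sum>p\<in>{p. p permutes {1..n}}. (of_nat (descents n p) + 1) * f (descents n p)
          + (of_nat n - of_nat (descents n p)) * f (Suc (descents n p)))"
    by (rule sum.cong[OF refl], rule sum_r[OF _ n], simp)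
  finally show ?thesis .
qed

definition TT :: "nat \<Rightarrow> nat \<Rightarrow> rat" where
  "TT n k = (\<Sum>p\<in>{p. p permutes {1..n}}. of_nat (descents n p) ^ k)"

definition RR :: "nat \<Rightarrow> (nat \<Rightarrow> rat) \<Rightarrow> nat \<Rightarrow> rat" where
  "RR n x k = x k + of_nat n * (\<Sum>i\<le>k. of_nat (k choose i) * x i) - (\<Sum>i<k. of_nat (k choose i) * x (i+1))"

lemma pointwise:
  fixes x :: rat
  shows "(x + 1) * x ^ k + (of_nat n - x) * (x + 1) ^ k
     = x ^ k + of_nat n * (\<Sum>i\<le>k. of_nat (k choose i) * x ^ i) - (\<Sum>i<k. of_nat (k choose i) * x ^ (i+1))"
proof -
  have b: "(x + 1) ^ k = (\<Sum>i\<le>k. of_nat (k choose i) * x ^ i)"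
    using binomial_ring[of x 1 k] by simp
  have "x * (x + 1) ^ k = (\<Sum>i\<le>k. of_nat (k choose i) * x ^ (i+1))"
    unfolding b by (simp add: sum_distrib_left algebra_simps)
  also have "\<dots> = (\<Sum>i<k. of_nat (k choose i) * x ^ (i+1)) + x ^ (k+1)"
    by (simp add: lessThan_Suc_atMost[symmetric])
  finally have c: "x * (x + 1) ^ k = (\<Sum>i<k. of_nat (k choose i) * x ^ (i+1)) + x ^ (k+1)" .
  have "(x + 1) * x ^ k + (of_nat n - x) * (x + 1) ^ k = x ^ (k+1) + x ^ k + of_nat n * (x + 1) ^ k - x * (x + 1) ^ k"
    by (simp add: algebra_simps)
  then show ?thesis unfolding c by (simp add: b)
qed

lemma TT_rec:
  assumes n: "1 \<le> n"
  shows "TT (Suc n) k = RR n (TT n) k"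
proof -
  have "TT (Suc n) k = (\<Sum>p\<in>{p. p permutes {1..n}}.
      of_nat (descents n p) ^ k + of_nat n * (\<Sum>i\<le>k. of_nat (k choose i) * of_nat (descents n p) ^ i)
      - (\<Sum>i<k. of_nat (k choose i) * of_nat (descents n p) ^ (i+1)))"
  proof -
    have "TT (Suc n) k = (\<Sum>p\<in>{p. p permutes {1..n}}. (of_nat (descents n p) + 1) * of_nat (descents n p) ^ k
          + (of_nat n - of_nat (descents n p)) * of_nat (Suc (descents n p)) ^ k)"
      unfolding TT_def using perm_sum[OF n, of "\<lambda>d. of_nat d ^ k"] by simp
    then show ?thesis by (simp only: Suc_eq_plus1 of_nat_add of_nat_1 pointwise)
  qed
  also have "\<dots> = RR n (TT n) k"
    unfolding RR_def TT_def
    by (simp add: sum_subtractf sum.distrib sum_distrib_left sum.swap[of _ _ "{..k}"] sum.swap[of _ _ "{..<k}"] algebra_simps)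
  finally show ?thesis .
qed



definition VV :: "rat fps" where "VV = Abs_fps (\<lambda>n. 1 / fact (n+2))"
definition UU :: "rat fps" where "UU = 1 + fps_X * VV"
definition FF :: "nat \<Rightarrow> rat fps" where "FF d = UU ^ (d+2) * fps_exp (-1)"
definition ee :: "nat \<Rightarrow> nat \<Rightarrow> rat" where "ee k d = fact k * fps_nth (FF d) k"

lemma exp_m1: "fps_exp (1::rat) - 1 = fps_X * UU"
proof (rule fps_ext)
  fix n show "fps_nth (fps_exp (1::rat) - 1) n = fps_nth (fps_X * UU) n"
  proof (cases n)
    case 0 then show ?thesis by (simp add: UU_def)
  next
    case (Suc m) then show ?thesis
      by (cases m) (simp_all add: UU_def VV_def fps_X_mult_nth algebra_simps)
  qed
qed

lemma UU_eq: "(fps_exp 1 - 1) / fps_X = UU"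
  unfolding exp_m1 by (rule nonzero_mult_div_cancel_left) simp

lemma UU_deriv: "fps_X * fps_deriv UU = fps_exp 1 - UU"
proof -
  have "fps_deriv (fps_X * UU) = fps_deriv (fps_exp (1::rat) - 1)" by (simp add: exp_m1)
  then have "UU + fps_X * fps_deriv UU = fps_exp 1" by (simp add: algebra_simps)
  then show ?thesis by (simp add: algebra_simps)
qed

lemma fps_const_m1: "fps_const (-1::rat) = -1"
  by (metis fps_const_neg fps_const_1_eq_1)

lemma FF_rec:
  fixes m :: nat
  defines "G \<equiv> UU ^ (m+1) * fps_exp (-1)"
  shows "of_nat (m+1) * (UU^(m+2) * fps_exp (-1)) = (1 + of_nat m * fps_exp 1) * G + (1 - fps_exp 1) * fps_deriv G"
proof -
  let ?E = "fps_exp (1::rat)" and ?e = "fps_exp (-1::rat)"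
  have d: "fps_deriv G = of_nat (m+1) * fps_deriv UU * UU^m * ?e - UU^(m+1) * ?e"
  proof -
    have p: "fps_deriv (UU^(Suc m)) = of_nat (Suc m) * fps_deriv UU * UU^m"
      using fps_deriv_power'[of UU "Suc m"] by simp
    have "fps_deriv G = fps_deriv (UU^Suc m) * ?e + UU^Suc m * fps_deriv ?e"
      by (simp only: G_def fps_deriv_mult Suc_eq_plus1 add.commute)
    also have "\<dots> = of_nat (Suc m) * fps_deriv UU * UU^m * ?e - UU^Suc m * ?e"
      unfolding p fps_exp_deriv fps_const_m1 by simp
    finally show ?thesis by simp

  qed
  have x: "1 - ?E = - (fps_X * UU)" using exp_m1 by (simp add: algebra_simps)
  have "(1 - ?E) * fps_deriv G = - (of_nat (m+1) * UU^(m+1) * (fps_X * fps_deriv UU) * ?e) + (?E - 1) * UU^(m+1) * ?e"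
    unfolding d x by (simp add: algebra_simps exp_m1)
  also have "\<dots> = - (of_nat (m+1) * UU^(m+1) * (?E - UU) * ?e) + (?E - 1) * UU^(m+1) * ?e"
    by (simp add: UU_deriv)
  finally have "(1 - ?E) * fps_deriv G = - (of_nat (m+1) * UU^(m+1) * (?E - UU) * ?e) + (?E - 1) * UU^(m+1) * ?e" .
  then show ?thesis unfolding G_def by (simp add: algebra_simps)
qed

lemma egf_mult_exp1:
  fixes G :: "rat fps"
  shows "fact k * fps_nth (G * fps_exp 1) k = (\<Sum>i\<le>k. of_nat (k choose i) * (fact i * fps_nth G i))"
proof -
  have "fact k * fps_nth (G * fps_exp 1) k = (\<Sum>i\<le>k. fact k * (fps_nth G i / fact (k - i)))"
    by (simp add: fps_mult_nth atLeast0AtMost sum_distrib_left)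
  also have "\<dots> = (\<Sum>i\<le>k. of_nat (k choose i) * (fact i * fps_nth G i))"
  proof (rule sum.cong)
    fix i assume "i \<in> {..k}"
    then have "i \<le> k" by simp
    then show "fact k * (fps_nth G i / fact (k - i)) = of_nat (k choose i) * (fact i * fps_nth G i)"
      by (simp add: binomial_fact field_simps)
  qed simp
  finally show ?thesis .
qed

lemma ee_rec:
  "of_nat (d+2) * ee k (d+1) = ee k d + of_nat (d+1) * (\<Sum>i\<le>k. of_nat (k choose i) * ee i d)
     - (\<Sum>i<k. of_nat (k choose i) * ee (i+1) d)"
proof -
  let ?E = "fps_exp (1::rat)" and ?G = "FF d"
  have r: "of_nat (d+2) * FF (d+1) = (1 + of_nat (d+1) * ?E) * ?G + (1 - ?E) * fps_deriv ?G"
    using FF_rec[of "d+1"] by (simp add: FF_def add.commute add.left_commute)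
  have "fact k * fps_nth (of_nat (d+2) * FF (d+1)) k = of_nat (d+2) * ee k (d+1)"
    unfolding fps_of_nat[symmetric] ee_def by simp
  moreover have "fact k * fps_nth ((1 + of_nat (d+1) * ?E) * ?G + (1 - ?E) * fps_deriv ?G) k
     = ee k d + of_nat (d+1) * (fact k * fps_nth (?G * ?E) k) + fact k * fps_nth (fps_deriv ?G) k
       - fact k * fps_nth (fps_deriv ?G * ?E) k"
  proof -
    have "(1 + of_nat (d+1) * ?E) * ?G + (1 - ?E) * fps_deriv ?G
       = ?G + fps_const (of_nat (d+1)) * (?G * ?E) + fps_deriv ?G - fps_deriv ?G * ?E"
      unfolding fps_of_nat by (simp add: algebra_simps)
    then have "fps_nth ((1 + of_nat (d+1) * ?E) * ?G + (1 - ?E) * fps_deriv ?G) k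
       = fps_nth ?G k + of_nat (d+1) * fps_nth (?G * ?E) k + fps_nth (fps_deriv ?G) k - fps_nth (fps_deriv ?G * ?E) k"
      by (simp only: fps_add_nth fps_sub_nth fps_mult_left_const_nth)
    then show ?thesis unfolding ee_def by (simp only: ring_distribs mult.left_commute[of "fact k"])

  qed
  moreover have "fact k * fps_nth (fps_deriv ?G) k = ee (k+1) d"
    by (simp add: ee_def fps_deriv_nth algebra_simps)
  moreover have "fact k * fps_nth (fps_deriv ?G * ?E) k = (\<Sum>i\<le>k. of_nat (k choose i) * ee (i+1) d)"
    unfolding egf_mult_exp1 by (simp add: ee_def fps_deriv_nth algebra_simps)
  moreover have "(\<Sum>i\<le>k. of_nat (k choose i) * ee (i+1) d) = (\<Sum>i<k. of_nat (k choose i) * ee (i+1) d) + ee (k+1) d"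
    by (simp add: lessThan_Suc_atMost[symmetric])
  moreover have "fact k * fps_nth (?G * ?E) k = (\<Sum>i\<le>k. of_nat (k choose i) * ee i d)"
    unfolding egf_mult_exp1 by (simp add: ee_def)
  ultimately show ?thesis using r by simp
qed


lemma RR_diff:
  assumes "\<And>j. j < k \<Longrightarrow> x j = y j"
  shows "RR n x k - RR n y k = (1 + of_nat n - of_nat k) * (x k - y k)"
proof (cases k)
  case 0 then show ?thesis by (simp add: RR_def algebra_simps)
next
  case (Suc m)
  have s1: "(\<Sum>i\<le>m. of_nat (Suc m choose i) * x i) = (\<Sum>i\<le>m. of_nat (Suc m choose i) * y i)"
    by (rule sum.cong) (use assms Suc in auto)
  have s2: "(\<Sum>i<m. of_nat (Suc m choose i) * x (i+1)) = (\<Sum>i<m. of_nat (Suc m choose i) * y (i+1))"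
    by (rule sum.cong) (use assms Suc in auto)
  have ex: "RR n z k = z k + of_nat n * ((\<Sum>i\<le>m. of_nat (Suc m choose i) * z i) + z k)
     - ((\<Sum>i<m. of_nat (Suc m choose i) * z (i+1)) + of_nat k * z k)" for z
    unfolding RR_def Suc by (simp add: binomial_Suc_n)
  have "RR n x k - RR n y k = (1 + of_nat n - of_nat k) * (x k - y k)
     + of_nat n * ((\<Sum>i\<le>m. of_nat (Suc m choose i) * x i) - (\<Sum>i\<le>m. of_nat (Suc m choose i) * y i))
     - ((\<Sum>i<m. of_nat (Suc m choose i) * x (i+1)) - (\<Sum>i<m. of_nat (Suc m choose i) * y (i+1)))"
    unfolding ex[of x] ex[of y] by (simp add: algebra_simps)
  then show ?thesis unfolding s1 s2 by simp
qed

lemma RR_scale: "RR n (\<lambda>i. c * y i) k = c * RR n y k"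
  unfolding RR_def by (simp add: sum_distrib_left algebra_simps)

lemma ee_RR: "of_nat (d+2) * ee k (d+1) = RR (d+1) (\<lambda>i. ee i d) k"
  unfolding RR_def by (rule ee_rec)

lemma TT_1: "TT 1 k = 0 ^ k"
proof -
  have "{p. p permutes {1..1::nat}} = {id}"
    by auto
  moreover have "descents 1 id = 0" by (simp add: descents_def)
  ultimately show ?thesis by (simp add: TT_def)
qed

lemma ee_00: "ee 0 0 = 1" by (simp add: ee_def FF_def UU_def)
lemma ee_10: "ee 1 0 = 0"
  by (simp add: ee_def FF_def UU_def VV_def power2_eq_square fps_mult_nth)

lemma main_TT: "k \<le> d + 1 \<Longrightarrow> TT (d+1) k = fact (d+1) * ee k d"
proof (induction d arbitrary: k)
  case 0
  then have "k = 0 \<or> k = 1" by auto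
  then show ?case using TT_1 ee_00 ee_10 by auto
next
  case (Suc d)
  let ?x = "TT (d+1)" and ?y = "\<lambda>i. fact (d+1) * ee i d"
  have h1: "TT (Suc d + 1) k = RR (d+1) ?x k" using TT_rec[of "d+1" k] by simp
  have h2: "fact (Suc d + 1) * ee k (Suc d) = RR (d+1) ?y k"
  proof -
    have "fact (Suc d + 1) * ee k (Suc d) = fact (d+1) * (of_nat (d+2) * ee k (d+1))"
      by (simp add: algebra_simps)
    also have "\<dots> = RR (d+1) ?y k" unfolding ee_RR RR_scale ..
    finally show ?thesis .
  qed
  have h3: "RR (d+1) ?x k - RR (d+1) ?y k = (1 + of_nat (d+1) - of_nat k) * (?x k - ?y k)"
    by (rule RR_diff) (use Suc in auto)
  have h4: "(1 + of_nat (d+1) - of_nat k) * (?x k - ?y k) = (0::rat)"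
  proof (cases "k \<le> d + 1")
    case True then show ?thesis using Suc.IH by simp
  next
    case False then have "k = d + 2" using Suc by auto
    then show ?thesis by simp
  qed
  have eq: "RR (d+1) ?x k = RR (d+1) ?y k" using h3 h4 by (simp only: right_minus_eq)
  show ?case by (simp only: h1 h2 eq)
qed

lemma moment_ee: "k \<le> d + 1 \<Longrightarrow> moment_X k d = ee k d"
proof -
  assume k: "k \<le> d + 1"
  have c: "(of_nat (card {p. p permutes {1..d+1}}) :: rat) = fact (d+1)"
    by (simp add: card_permutations del: One_nat_def)
  have "moment_X k d = TT (d+1) k / fact (d+1)"
    unfolding moment_X_def TT_def c by (rule refl)
  then show ?thesis using main_TT[OF k] by simp
qed



definition WW :: "nat \<Rightarrow> rat fps" where "WW m = VV ^ m * fps_exp (-1)"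
definition BB :: "nat \<Rightarrow> rat poly" where
  "BB m = smult (1 / fact m) (\<Prod>i<m. [:2 - of_nat i, 1:])"
definition EP :: "nat \<Rightarrow> rat poly" where
  "EP k = smult (fact k) (\<Sum>m\<le>k. smult (fps_nth (WW m) (k - m)) (BB m))"

lemma poly_BB: "poly (BB m) (of_nat d) = of_nat ((d + 2) choose m)"
proof -
  have "poly (BB m) (of_nat d) = (\<Prod>i<m. (of_nat (d+2) - of_nat i :: rat)) / fact m"
    unfolding BB_def by (simp add: poly_prod algebra_simps)
  also have "\<dots> = of_nat (d+2) gchoose m"
    by (simp add: gbinomial_prod_rev atLeast0LessThan)
  also have "\<dots> = of_nat ((d + 2) choose m)" by (simp add: binomial_gbinomial)
  finally show ?thesis .
qed

lemma BB_prod_deg: "degree (\<Prod>i<m. [:2 - of_nat i, 1::rat:]) = m"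
  by (subst degree_prod_sum_eq) auto

lemma BB_prod_lc: "lead_coeff (\<Prod>i<m. [:2 - of_nat i, 1::rat:]) = 1"
  by (simp add: lead_coeff_prod)

lemma BB_coeff_top: "coeff (BB m) m = 1 / fact m"
  using BB_prod_lc[of m] BB_prod_deg[of m] unfolding BB_def by simp

lemma BB_coeff_high: "m < j \<Longrightarrow> coeff (BB m) j = 0"
  using BB_prod_deg[of m] unfolding BB_def by (simp add: coeff_eq_0)

lemma WW_0: "fps_nth (WW k) 0 = (1/2) ^ k"
  by (simp add: WW_def VV_def fps_nth_power_0)

lemma coeff_EP_high: "k < j \<Longrightarrow> coeff (EP k) j = 0"
  unfolding EP_def by (simp add: coeff_sum BB_coeff_high)

lemma coeff_EP_top: "coeff (EP k) k = (1/2) ^ k"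
proof -
  have "coeff (EP k) k = fact k * (\<Sum>m<Suc k. fps_nth (WW m) (k - m) * coeff (BB m) k)"
    unfolding EP_def by (simp add: coeff_sum lessThan_Suc_atMost)
  also have "\<dots> = fact k * (fps_nth (WW k) 0 * coeff (BB k) k)"
    by (simp add: BB_coeff_high)
  also have "\<dots> = (1/2) ^ k" by (simp add: WW_0 BB_coeff_top)
  finally show ?thesis .
qed

lemma degree_EP: "degree (EP k) = k"
proof (rule antisym)
  show "degree (EP k) \<le> k" by (rule degree_le) (simp add: coeff_EP_high)
  show "k \<le> degree (EP k)" by (rule le_degree) (simp add: coeff_EP_top)
qed

lemma UU_pow: "UU ^ N * fps_exp (-1) = (\<Sum>m\<le>N. fps_const (of_nat (N choose m)) * (fps_X ^ m * WW m))"
proof -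
  have "UU ^ N = (\<Sum>m\<le>N. of_nat (N choose m) * (fps_X * VV) ^ m * 1 ^ (N - m))"
    unfolding UU_def using binomial_ring[of "fps_X * VV" 1 N] by (simp add: add.commute)
  then show ?thesis
    by (simp add: sum_distrib_right WW_def power_mult_distrib fps_of_nat mult.assoc)
qed

lemma poly_EP: "poly (EP k) (of_nat d) = ee k d"
proof -
  let ?N = "d + 2"
  let ?g = "\<lambda>m. of_nat (?N choose m) * (if k < m then 0 else fps_nth (WW m) (k - m))"
  have "fps_nth (FF d) k = (\<Sum>m\<le>?N. ?g m)"
    unfolding FF_def UU_pow by (simp only: fps_sum_nth fps_mult_left_const_nth fps_X_power_mult_nth)
  also have "\<dots> = (\<Sum>m\<le>?N + k. ?g m)"
    by (rule sum.mono_neutral_left) auto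
  also have "\<dots> = (\<Sum>m\<le>k. fps_nth (WW m) (k - m) * of_nat (?N choose m))"
    by (rule sum.mono_neutral_cong_right) auto
  finally have "fps_nth (FF d) k = (\<Sum>m\<le>k. fps_nth (WW m) (k - m) * of_nat (?N choose m))" .
  then show ?thesis
    unfolding EP_def ee_def by (simp add: poly_sum poly_BB)
qed

lemma egf_prod:
  fixes A B :: "rat fps"
  shows "fact k * fps_nth (A * B) k = (\<Sum>i\<le>k. of_nat (k choose i) * (fact i * fps_nth A i) * (fact (k - i) * fps_nth B (k - i)))"
proof -
  have "fact k * fps_nth (A * B) k = (\<Sum>i\<le>k. fact k * (fps_nth A i * fps_nth B (k - i)))"
    by (simp add: fps_mult_nth atLeast0AtMost sum_distrib_left)
  also have "\<dots> = (\<Sum>i\<le>k. of_nat (k choose i) * (fact i * fps_nth A i) * (fact (k - i) * fps_nth B (k - i)))"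
  proof (rule sum.cong)
    fix i assume "i \<in> {..k}"
    then have "i \<le> k" by simp
    then show "fact k * (fps_nth A i * fps_nth B (k - i)) = of_nat (k choose i) * (fact i * fps_nth A i) * (fact (k - i) * fps_nth B (k - i))"
      by (simp add: binomial_fact field_simps)
  qed simp
  finally show ?thesis .
qed

lemma egf_exp:
  fixes G :: "rat fps"
  shows "fact k * fps_nth (G * fps_exp c) k = (\<Sum>i\<le>k. of_nat (k choose i) * (fact i * fps_nth G i) * c ^ (k - i))"
  unfolding egf_prod by simp

definition YY :: "rat fps" where "YY = UU * fps_exp (-1/2)"

lemma Eprime_YY: "Eprime EP k (of_nat N) = fact k * fps_nth (YY ^ (N + 2)) k"
proof -
  have e: "FF N * fps_exp (- of_nat N / 2) = YY ^ (N + 2)"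
  proof -
    have "YY ^ (N + 2) = UU ^ (N + 2) * fps_exp (of_nat (N + 2) * (-1/2))"
      unfolding YY_def by (simp only: power_mult_distrib fps_exp_power_mult)
    also have "of_nat (N + 2) * (-1/2) = (-1) + (- of_nat N / 2 :: rat)" by (simp add: field_simps)
    also have "UU ^ (N + 2) * fps_exp ((-1) + (- of_nat N / 2 :: rat)) = FF N * fps_exp (- of_nat N / 2)"
      unfolding FF_def fps_exp_add_mult by (simp add: mult.assoc)
    finally show ?thesis by simp
  qed
  have "Eprime EP k (of_nat N) = (\<Sum>i\<le>k. of_nat (k choose i) * (fact i * fps_nth (FF N) i) * (- of_nat N / 2) ^ (k - i))"
    unfolding Eprime_def poly_EP ee_def by simp
  also have "\<dots> = fact k * fps_nth (FF N * fps_exp (- of_nat N / 2)) k"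
    unfolding egf_exp ..
  finally show ?thesis unfolding e .
qed

theorem theorem3p10:
  shows "\<exists>E :: nat \<Rightarrow> rat poly.
    (\<forall>k. degree (E k) = k) \<and>
    (\<forall>k d. k \<le> d + 1 \<longrightarrow> moment_X k d = poly (E k) (of_nat d)) \<and>
    (\<forall>d::nat. Abs_fps (\<lambda>k. poly (E k) (of_nat d) / fact k)
        = ((fps_exp 1 - 1) / fps_X) ^ (d + 2) * fps_exp (-1)) \<and>
    (\<forall>a b k :: nat. Eprime E k (of_nat (a + b + 2))
        = (\<Sum>i\<le>k. of_nat (k choose i) * Eprime E i (of_nat a) * Eprime E (k - i) (of_nat b)))"
proof (intro exI[of _ EP] conjI allI impI)
  fix k show "degree (EP k) = k" by (rule degree_EP)
next
  fix k d :: nat assume "k \<le> d + 1"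
  then show "moment_X k d = poly (EP k) (of_nat d)" by (simp add: moment_ee poly_EP)
next
  fix d :: nat
  show "Abs_fps (\<lambda>k. poly (EP k) (of_nat d) / fact k) = ((fps_exp 1 - 1) / fps_X) ^ (d + 2) * fps_exp (-1)"
    unfolding UU_eq FF_def[symmetric]
    by (rule fps_ext) (simp add: poly_EP ee_def)
next
  fix a b k :: nat
  have "Eprime EP k (of_nat (a + b + 2)) = fact k * fps_nth (YY ^ (a + 2) * YY ^ (b + 2)) k"
    unfolding Eprime_YY power_add[symmetric] by (simp add: algebra_simps)
  also have "\<dots> = (\<Sum>i\<le>k. of_nat (k choose i) * Eprime EP i (of_nat a) * Eprime EP (k - i) (of_nat b))"
    unfolding egf_prod Eprime_YY by (simp add: mult.assoc)
  finally show "Eprime EP k (of_nat (a + b + 2)) = (\<Sum>i\<le>k. of_nat (k choose i) * Eprime EP i (of_nat a) * Eprime EP (k - i) (of_nat b))" .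
qed

end
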